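(* Let $E\subseteq\mathbb{R}$ be a measurable weakly nowhere dense set. Then the set $D_L(E)$ of points of $E$ which are left density points of $E$ is of first category in $E$ (with the subspace topology), and likewise the set $D_R(E)$ of points of $E$ which are right density points of $E$ is of first category in $E$.
   Context: $|A|$ denotes Lebesgue measure. A set $E\subseteq\mathbb{R}$ is weakly nowhere dense if for every (nondegenerate) interval $J$ the set $E\cap J$ does not have full measure in $J$, i.e. $|J\setminus E|>0$. A point $x$ is a left (resp. right) density point of $E$ if for every sequence of intervals $I_n=[x-r_n,x]$ (resp. $I_n=[x,x+r_n]$) with $r_n\searrow0$ we have $|E\cap I_n|/|I_n|\to1$. *)

theory Defs
  imports "HOL-Analysis.Analysis"
begin

definition weakly_nowhere_dense :: "real set \<Rightarrow> bool" where
  "weakly_nowhere_dense E \<longleftrightarrow>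
     (\<forall>a b. a < b \<longrightarrow> emeasure lebesgue ({a..b} - E) > 0)"

definition left_density_point :: "real set \<Rightarrow> real \<Rightarrow> bool" where
  "left_density_point E x \<longleftrightarrow>
     (\<forall>r :: nat \<Rightarrow> real. (\<forall>n. r n > 0) \<and> decseq r \<and> r \<longlonglongrightarrow> 0 \<longrightarrow>
        (\<lambda>n. measure lebesgue (E \<inter> {x - r n .. x}) / r n) \<longlonglongrightarrow> 1)"

definition right_density_point :: "real set \<Rightarrow> real \<Rightarrow> bool" where
  "right_density_point E x \<longleftrightarrow>
     (\<forall>r :: nat \<Rightarrow> real. (\<forall>n. r n > 0) \<and> decseq r \<and> r \<longlonglongrightarrow> 0 \<longrightarrow>
        (\<lambda>n. measure lebesgue (E \<inter> {x .. x + r n}) / r n) \<longlonglongrightarrow> 1)"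

definition nowhere_dense_in :: "'a topology \<Rightarrow> 'a set \<Rightarrow> bool" where
  "nowhere_dense_in X A \<longleftrightarrow> A \<subseteq> topspace X \<and> X interior_of (X closure_of A) = {}"

definition first_category_in :: "'a topology \<Rightarrow> 'a set \<Rightarrow> bool" where
  "first_category_in X A \<longleftrightarrow>
     (\<exists>F :: nat \<Rightarrow> 'a set. (\<forall>n. nowhere_dense_in X (F n)) \<and> A \<subseteq> (\<Union>n. F n))"

end

theory Submission
  imports Defs
begin

lemma dens_zero:
  fixes A :: "real set"
  assumes Am: "A \<in> lmeasurable" and Asub: "A \<subseteq> {c..d}"
    and H: "\<And>u v. c \<le> u \<Longrightarrow> u < v \<Longrightarrow> v \<le> d \<Longrightarrow> measure lebesgue (A \<inter> {u..v}) \<le> (v-u)/2"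
  shows "measure lebesgue A = 0"
proof (rule ccontr)
  assume "measure lebesgue A \<noteq> 0"
  then have pos: "measure lebesgue A > 0" using measure_nonneg[of lebesgue A] by linarith
  define e where "e = measure lebesgue A / 8"
  have e: "e > 0" using pos by (simp add: e_def)
  obtain \<D> where cD: "countable \<D>"
    and Dint: "\<And>K. K \<in> \<D> \<Longrightarrow> K \<subseteq> cbox c d \<and> K \<noteq> {} \<and> (\<exists>a b. K = cbox a b)"
    and Ddisj: "pairwise (\<lambda>A B. interior A \<inter> interior B = {}) \<D>"
    and AD: "A \<subseteq> \<Union>\<D>" and UDm: "\<Union>\<D> \<in> lmeasurable"
    and UDle: "measure lebesgue (\<Union>\<D>) \<le> measure lebesgue A + e"
  proof -
    have "A \<subseteq> cbox c d" using Asub by simp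
    from measurable_outer_intervals_bounded[OF Am this e] show ?thesis
      by (metis that)
  qed
  have Km: "K \<in> lmeasurable" if "K \<in> \<D>" for K using Dint[OF that] by auto
  have "\<And>D'. D' \<subseteq> \<D> \<Longrightarrow> finite D' \<Longrightarrow> measure lebesgue (\<Union>D') \<le> d - c"
  proof -
    fix D' assume D': "D' \<subseteq> \<D>" "finite D'"
    have "\<Union>D' \<subseteq> {c..d}" using D' Dint by fastforce
    moreover have "\<Union>D' \<in> lmeasurable" using D' Km by (auto intro: fmeasurable.finite_Union)
    ultimately have "measure lebesgue (\<Union>D') \<le> measure lebesgue {c..d}"
      by (intro measure_mono_fmeasurable) auto
    moreover have "c \<le> d" using \<open>A \<subseteq> {c..d}\<close> pos by (metis atLeastatMost_empty' empty_subsetI measure_empty order_less_irrefl subset_antisym)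
    ultimately show "measure lebesgue (\<Union>D') \<le> d - c" by simp
  qed
  then obtain F where FD: "F \<subseteq> \<D>" and fF: "finite F"
    and Fbig: "measure lebesgue (\<Union>\<D>) - e < measure lebesgue (\<Union>F)"
    using measure_countable_Union_approachable[OF cD e Km] by blast
  have UFm: "\<Union>F \<in> lmeasurable" using FD Km fF by (auto intro: fmeasurable.finite_Union)
  have UFD: "\<Union>F \<subseteq> \<Union>\<D>" using FD by auto
  have s1: "measure lebesgue (A \<inter> \<Union>F) \<le> (\<Sum>K\<in>F. measure lebesgue (A \<inter> K))"
  proof -
    have "A \<inter> \<Union>F = (\<Union>K\<in>F. A \<inter> K)" by auto
    then show ?thesis using measure_UNION_le[OF fF, of "\<lambda>K. A \<inter> K" lebesgue] Am Km FD
      by (auto intro!: sets.Int fmeasurableD)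
  qed
  have s2: "measure lebesgue (A \<inter> K) \<le> measure lebesgue K / 2" if KF: "K \<in> F" for K
  proof -
    have "K \<in> \<D>" using KF FD by blast
    then obtain a b where K: "K = cbox a b" "K \<subseteq> cbox c d" "K \<noteq> {}" using Dint by blast
    then have ab: "a \<le> b" "c \<le> a" "b \<le> d" by auto
    show ?thesis
    proof (cases "a < b")
      case True
      then show ?thesis using H[of a b] ab K by simp
    next
      case False
      then have "K = {a}" using K ab by auto
      then show ?thesis by (simp add: Int_insert_right)
    qed
  qed
  have s3: "(\<Sum>K\<in>F. measure lebesgue K) = measure lebesgue (\<Union>F)"
  proof (rule measure_negligible_finite_Union[symmetric, OF fF])
    show "\<And>S. S \<in> F \<Longrightarrow> S \<in> lmeasurable" using Km FD by auto
    show "pairwise (\<lambda>S T. negligible (S \<inter> T)) F"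
    proof (rule pairwiseI)
      fix S T assume ST: "S \<in> F" "T \<in> F" "S \<noteq> T"
      obtain a b where S: "S = cbox a b" using Dint ST FD by blast
      obtain a' b' where T: "T = cbox a' b'" using Dint ST FD by blast
      have ii: "interior S \<inter> interior T = {}" using Ddisj ST FD by (auto simp: pairwise_def)
      have "S \<inter> T \<subseteq> (cbox a b - box a b) \<union> (cbox a' b' - box a' b') \<union> (interior S \<inter> interior T)"
        using S T by auto
      moreover have "negligible ((cbox a b - box a b) \<union> (cbox a' b' - box a' b') \<union> (interior S \<inter> interior T))"
        using ii negligible_frontier_interval[of a b] negligible_frontier_interval[of a' b'] by simp
      ultimately show "negligible (S \<inter> T)" by (rule negligible_subset[rotated])
    qed
  qed
  have s4: "measure lebesgue (A \<inter> \<Union>F) \<le> measure lebesgue (\<Union>F) / 2"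
  proof -
    have "(\<Sum>K\<in>F. measure lebesgue (A \<inter> K)) \<le> (\<Sum>K\<in>F. measure lebesgue K / 2)"
      by (rule sum_mono) (use s2 in auto)
    also have "\<dots> = measure lebesgue (\<Union>F) / 2" using s3 by (simp only: sum_divide_distrib[symmetric])
    finally show ?thesis using s1 by linarith
  qed
  have s5: "measure lebesgue A \<le> measure lebesgue (A \<inter> \<Union>F) + measure lebesgue (\<Union>\<D> - \<Union>F)"
  proof -
    have "A \<subseteq> (A \<inter> \<Union>F) \<union> (\<Union>\<D> - \<Union>F)" using AD by auto
    then have "measure lebesgue A \<le> measure lebesgue ((A \<inter> \<Union>F) \<union> (\<Union>\<D> - \<Union>F))"
      by (intro measure_mono_fmeasurable) (use Am UFm UDm in auto)
    also have "\<dots> \<le> measure lebesgue (A \<inter> \<Union>F) + measure lebesgue (\<Union>\<D> - \<Union>F)"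
      by (rule measure_Un_le) (use Am UFm UDm in auto)
    finally show ?thesis .
  qed
  have s6: "measure lebesgue (\<Union>\<D> - \<Union>F) = measure lebesgue (\<Union>\<D>) - measure lebesgue (\<Union>F)"
    using measurable_measure_Diff[OF UDm fmeasurableD[OF UFm] UFD] .
  show False using s4 s5 s6 Fbig UDle pos unfolding e_def by linarith
qed


lemma lip_window:
  fixes E :: "real set"
  assumes Em: "E \<in> sets lebesgue"
  shows "measure lebesgue (E \<inter> {x-p..x+q}) \<le> measure lebesgue (E \<inter> {y-p..y+q}) + 2*\<bar>x-y\<bar>"
proof -
  define d where "d = \<bar>x-y\<bar>"
  have d: "d \<ge> 0" by (simp add: d_def)
  have sub: "E \<inter> {x-p..x+q} \<subseteq> (E \<inter> {y-p..y+q}) \<union> {y-p-d..y-p} \<union> {y+q..y+q+d}"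
    by (auto simp: d_def)
  have m1: "E \<inter> {y-p..y+q} \<in> lmeasurable" "E \<inter> {x-p..x+q} \<in> lmeasurable"
    by (simp_all add: Em bounded_Int bounded_set_imp_lmeasurable sets.Int)
  have "measure lebesgue (E \<inter> {x-p..x+q}) \<le> measure lebesgue ((E \<inter> {y-p..y+q}) \<union> {y-p-d..y-p} \<union> {y+q..y+q+d})"
    by (rule measure_mono_fmeasurable[OF sub]) (use m1 in auto)
  also have "\<dots> \<le> measure lebesgue ((E \<inter> {y-p..y+q}) \<union> {y-p-d..y-p}) + measure lebesgue {y+q..y+q+d}"
    by (rule measure_Un_le) (use m1 in auto)
  also have "\<dots> \<le> measure lebesgue (E \<inter> {y-p..y+q}) + measure lebesgue {y-p-d..y-p} + measure lebesgue {y+q..y+q+d}"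
    using measure_Un_le[of "E \<inter> {y-p..y+q}" lebesgue "{y-p-d..y-p}"] m1 by auto
  also have "\<dots> = measure lebesgue (E \<inter> {y-p..y+q}) + 2*d" using d by simp
  finally show ?thesis by (simp add: d_def)
qed

lemma lip_left:
  fixes E :: "real set"
  assumes Em: "E \<in> sets lebesgue"
  shows "measure lebesgue (E \<inter> {x-r..x}) \<le> measure lebesgue (E \<inter> {y-r..y}) + 2*\<bar>x-y\<bar>"
  using lip_window[OF Em, of x r 0 y] by simp

lemma lip_right:
  fixes E :: "real set"
  assumes Em: "E \<in> sets lebesgue"
  shows "measure lebesgue (E \<inter> {x..x+r}) \<le> measure lebesgue (E \<inter> {y..y+r}) + 2*\<bar>x-y\<bar>"
  using lip_window[OF Em, of x 0 r y] by simp

lemma nd_generic: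
  fixes E :: "real set" and f :: "real \<Rightarrow> real \<Rightarrow> real"
  assumes lipf: "\<And>r x y. f r x \<le> f r y + 2*\<bar>x-y\<bar>"
    and L: "\<And>x \<delta>. x \<in> E \<Longrightarrow> \<delta> > 0 \<Longrightarrow> \<exists>y\<in>E. \<bar>y-x\<bar> < \<delta> \<and> (\<exists>r. 0 < r \<and> r \<le> h \<and> f r y < r/2)"
  shows "nowhere_dense_in (top_of_set E) {x\<in>E. \<forall>r. 0 < r \<and> r \<le> h \<longrightarrow> f r x \<ge> r/2}"
proof -
  define G where "G = {x\<in>E. \<forall>r. 0 < r \<and> r \<le> h \<longrightarrow> f r x \<ge> r/2}"
  have GE: "G \<subseteq> E" by (auto simp: G_def)
  have cl: "top_of_set E closure_of G \<subseteq> G"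
  proof
    fix z assume "z \<in> top_of_set E closure_of G"
    then have zE: "z \<in> E" and zc: "z \<in> closure G"
      using closure_of_subtopology[of euclidean E G] GE by (auto simp: euclidean_closure_of Int_absorb1)
    have "f r z \<ge> r/2" if r: "0 < r" "r \<le> h" for r
    proof (rule ccontr)
      assume "\<not> f r z \<ge> r/2"
      define e where "e = (r/2 - f r z)/4"
      have e: "e > 0" using \<open>\<not> f r z \<ge> r/2\<close> by (simp add: e_def)
      obtain y where y: "y \<in> G" "dist y z < e" using closure_approachable[of z G] zc e by blast
      have "f r y \<ge> r/2" using y r by (auto simp: G_def)
      moreover have "f r y \<le> f r z + 2*\<bar>y-z\<bar>" by (rule lipf)
      moreover have "\<bar>y-z\<bar> < e" using y by (simp add: dist_real_def)
      ultimately show False using \<open>\<not> f r z \<ge> r/2\<close> unfolding e_def by argo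
    qed
    then show "z \<in> G" using zE by (auto simp: G_def)
  qed
  have "top_of_set E interior_of G = {}"
  proof (rule ccontr)
    assume "top_of_set E interior_of G \<noteq> {}"
    then obtain z T where T: "openin (top_of_set E) T" "z \<in> T" "T \<subseteq> G"
      by (auto simp: interior_of_def)
    then obtain V where V: "open V" "T = E \<inter> V" by (auto simp: openin_open)
    then have zV: "z \<in> V" "z \<in> E" using T by auto
    obtain \<delta> where \<delta>: "\<delta> > 0" "ball z \<delta> \<subseteq> V" using V(1) zV open_contains_ball by blast
    obtain y r where y: "y \<in> E" "\<bar>y-z\<bar> < \<delta>" "0 < r" "r \<le> h" "f r y < r/2"
      using L[OF zV(2) \<delta>(1)] by blast
    have "y \<in> ball z \<delta>" using y by (simp add: dist_real_def abs_minus_commute)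
    then have "y \<in> G" using \<delta> V T y by auto
    then show False using y by (auto simp: G_def)
  qed
  moreover have "top_of_set E interior_of (top_of_set E closure_of G) \<subseteq> top_of_set E interior_of G"
    by (rule interior_of_mono[OF cl])
  ultimately show ?thesis using GE unfolding nowhere_dense_in_def G_def[symmetric] by auto
qed


lemma lmeas_int: "(E::real set) \<in> sets lebesgue \<Longrightarrow> E \<inter> {a..b} \<in> lmeasurable"
  by (simp add: bounded_Int bounded_set_imp_lmeasurable sets.Int)

lemma finish_contra:
  fixes E :: "real set"
  assumes Em: "E \<in> sets lebesgue" and wnd: "weakly_nowhere_dense E" and cd: "c < d"
    and H: "\<And>u v. c \<le> u \<Longrightarrow> u < v \<Longrightarrow> v \<le> d \<Longrightarrow> measure lebesgue (E \<inter> {u..v}) \<ge> (v-u)/2"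
  shows False
proof -
  define A where "A = {c..d} - E"
  have Am: "A \<in> lmeasurable" unfolding A_def using Em by (simp add: fmeasurable_Diff)
  have "measure lebesgue A = 0"
  proof (rule dens_zero[OF Am])
    show "A \<subseteq> {c..d}" by (auto simp: A_def)
    fix u v assume uv: "c \<le> u" "u < v" "v \<le> d"
    have eq: "A \<inter> {u..v} = {u..v} - (E \<inter> {u..v})" using uv by (auto simp: A_def)
    have "measure lebesgue (A \<inter> {u..v}) = measure lebesgue {u..v} - measure lebesgue (E \<inter> {u..v})"
      unfolding eq by (rule measurable_measure_Diff) (use lmeas_int[OF Em] in auto)
    then show "measure lebesgue (A \<inter> {u..v}) \<le> (v-u)/2" using H[OF uv] uv by simp
  qed
  moreover have "emeasure lebesgue A > 0" using wnd cd unfolding weakly_nowhere_dense_def A_def by blast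
  ultimately show False using Am by (simp add: emeasure_eq_measure2)
qed

lemma core_left:
  fixes E :: "real set"
  assumes Em: "E \<in> sets lebesgue" and wnd: "weakly_nowhere_dense E" and h: "h > 0"
    and xE: "x \<in> E" and d: "\<delta> > 0"
  shows "\<exists>y\<in>E. \<bar>y-x\<bar> < \<delta> \<and> (\<exists>r. 0 < r \<and> r \<le> h \<and> measure lebesgue (E \<inter> {y-r..y}) < r/2)"
proof (rule ccontr)
  assume "\<not> ?thesis"
  then have N: "\<And>y r. y \<in> E \<Longrightarrow> \<bar>y-x\<bar> < \<delta> \<Longrightarrow> 0 < r \<Longrightarrow> r \<le> h \<Longrightarrow> measure lebesgue (E \<inter> {y-r..y}) \<ge> r/2"
    by (meson not_le)
  define c where "c = x - min \<delta> h / 2"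
  have cx: "c < x" "x - c < \<delta>" "x - c < h" using d h by (auto simp: c_def)
  show False
  proof (rule finish_contra[OF Em wnd cx(1)])
    fix u v assume uv: "c \<le> u" "u < v" "v \<le> x"
    define S where "S = E \<inter> {v..x}"
    define s where "s = Inf S"
    have xS: "x \<in> S" using xE uv by (auto simp: S_def)
    have bdd: "bdd_below S" by (auto simp: S_def bdd_below_def)
    have sx: "s \<le> x" using cInf_lower[OF xS bdd] by (simp add: s_def)
    have vs: "v \<le> s" unfolding s_def by (rule cInf_greatest) (use xS in \<open>auto simp: S_def\<close>)
    define r where "r = s - u"
    have r: "0 < r" "r \<le> h" using uv vs sx cx by (auto simp: r_def)
    have fs: "measure lebesgue (E \<inter> {s-r..s}) \<ge> r/2"
    proof (rule ccontr)
      assume ne: "\<not> measure lebesgue (E \<inter> {s-r..s}) \<ge> r/2"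
      define e where "e = (r/2 - measure lebesgue (E \<inter> {s-r..s}))/4"
      have e: "e > 0" using ne by (simp add: e_def)
      have "Inf S < s + e" using e by (simp add: s_def)
      then obtain y where y: "y \<in> S" "y < s + e" using cInf_less_iff[of S "s+e"] xS bdd by blast
      have ys: "s \<le> y" using cInf_lower[OF y(1) bdd] by (simp add: s_def)
      have yE: "y \<in> E" "\<bar>y-x\<bar> < \<delta>" using y uv cx by (auto simp: S_def)
      have "measure lebesgue (E \<inter> {y-r..y}) \<ge> r/2" by (rule N[OF yE r])
      moreover have "measure lebesgue (E \<inter> {y-r..y}) \<le> measure lebesgue (E \<inter> {s-r..s}) + 2*\<bar>y-s\<bar>"
        by (rule lip_left[OF Em])
      moreover have "\<bar>y-s\<bar> < e" using y ys by simp
      ultimately show False using ne unfolding e_def by argo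
    qed
    have sub: "E \<inter> {u..s} \<subseteq> (E \<inter> {u..v}) \<union> {s}"
    proof
      fix z assume z: "z \<in> E \<inter> {u..s}"
      show "z \<in> (E \<inter> {u..v}) \<union> {s}"
      proof (cases "z \<le> v")
        case True then show ?thesis using z by auto
      next
        case False
        then have "z \<in> S" using z sx by (auto simp: S_def)
        then have "s \<le> z" using cInf_lower[OF _ bdd] by (simp add: s_def)
        then show ?thesis using z by auto
      qed
    qed
    have Um: "(E \<inter> {u..v}) \<union> {s} \<in> lmeasurable"
      by (rule fmeasurable.Un) (use lmeas_int[OF Em] lmeasurable_cbox[of s s] in auto)
    have "measure lebesgue (E \<inter> {u..s}) \<le> measure lebesgue ((E \<inter> {u..v}) \<union> {s})"
      by (rule measure_mono_fmeasurable[OF sub]) (use Um lmeas_int[OF Em] in auto)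
    also have "\<dots> \<le> measure lebesgue (E \<inter> {u..v}) + measure lebesgue {s}"
      by (rule measure_Un_le) (use lmeas_int[OF Em] in auto)
    finally have "measure lebesgue (E \<inter> {u..s}) \<le> measure lebesgue (E \<inter> {u..v})" by simp
    moreover have "s - r = u" by (simp add: r_def)
    ultimately show "measure lebesgue (E \<inter> {u..v}) \<ge> (v-u)/2" using fs vs r_def by simp
  qed
qed

lemma core_right:
  fixes E :: "real set"
  assumes Em: "E \<in> sets lebesgue" and wnd: "weakly_nowhere_dense E" and h: "h > 0"
    and xE: "x \<in> E" and d: "\<delta> > 0"
  shows "\<exists>y\<in>E. \<bar>y-x\<bar> < \<delta> \<and> (\<exists>r. 0 < r \<and> r \<le> h \<and> measure lebesgue (E \<inter> {y..y+r}) < r/2)"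
proof (rule ccontr)
  assume "\<not> ?thesis"
  then have N: "\<And>y r. y \<in> E \<Longrightarrow> \<bar>y-x\<bar> < \<delta> \<Longrightarrow> 0 < r \<Longrightarrow> r \<le> h \<Longrightarrow> measure lebesgue (E \<inter> {y..y+r}) \<ge> r/2"
    by (meson not_le)
  define c where "c = x + min \<delta> h / 2"
  have cx: "x < c" "c - x < \<delta>" "c - x < h" using d h by (auto simp: c_def)
  show False
  proof (rule finish_contra[OF Em wnd cx(1)])
    fix u v assume uv: "x \<le> u" "u < v" "v \<le> c"
    define S where "S = E \<inter> {x..u}"
    define s where "s = Sup S"
    have xS: "x \<in> S" using xE uv by (auto simp: S_def)
    have bdd: "bdd_above S" by (auto simp: S_def bdd_above_def)
    have sx: "x \<le> s" using cSup_upper[OF xS bdd] by (simp add: s_def)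
    have vs: "s \<le> u" unfolding s_def by (rule cSup_least) (use xS in \<open>auto simp: S_def\<close>)
    define r where "r = v - s"
    have r: "0 < r" "r \<le> h" using uv vs sx cx by (auto simp: r_def)
    have fs: "measure lebesgue (E \<inter> {s..s+r}) \<ge> r/2"
    proof (rule ccontr)
      assume ne: "\<not> measure lebesgue (E \<inter> {s..s+r}) \<ge> r/2"
      define e where "e = (r/2 - measure lebesgue (E \<inter> {s..s+r}))/4"
      have e: "e > 0" using ne by (simp add: e_def)
      have "s - e < Sup S" using e by (simp add: s_def)
      then obtain y where y: "y \<in> S" "s - e < y" using less_cSup_iff[of S "s-e"] xS bdd by blast
      have ys: "y \<le> s" using cSup_upper[OF y(1) bdd] by (simp add: s_def)
      have yE: "y \<in> E" "\<bar>y-x\<bar> < \<delta>" using y uv cx by (auto simp: S_def)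
      have "measure lebesgue (E \<inter> {y..y+r}) \<ge> r/2" by (rule N[OF yE r])
      moreover have "measure lebesgue (E \<inter> {y..y+r}) \<le> measure lebesgue (E \<inter> {s..s+r}) + 2*\<bar>y-s\<bar>"
        by (rule lip_right[OF Em])
      moreover have "\<bar>y-s\<bar> < e" using y ys by simp
      ultimately show False using ne unfolding e_def by argo
    qed
    have sub: "E \<inter> {s..v} \<subseteq> (E \<inter> {u..v}) \<union> {s}"
    proof
      fix z assume z: "z \<in> E \<inter> {s..v}"
      show "z \<in> (E \<inter> {u..v}) \<union> {s}"
      proof (cases "u \<le> z")
        case True then show ?thesis using z by auto
      next
        case False
        then have "z \<in> S" using z sx by (auto simp: S_def)
        then have "z \<le> s" using cSup_upper[OF _ bdd] by (simp add: s_def)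
        then show ?thesis using z by auto
      qed
    qed
    have Um: "(E \<inter> {u..v}) \<union> {s} \<in> lmeasurable"
      by (rule fmeasurable.Un) (use lmeas_int[OF Em] lmeasurable_cbox[of s s] in auto)
    have "measure lebesgue (E \<inter> {s..v}) \<le> measure lebesgue ((E \<inter> {u..v}) \<union> {s})"
      by (rule measure_mono_fmeasurable[OF sub]) (use Um lmeas_int[OF Em] in auto)
    also have "\<dots> \<le> measure lebesgue (E \<inter> {u..v}) + measure lebesgue {s}"
      by (rule measure_Un_le) (use lmeas_int[OF Em] in auto)
    finally have "measure lebesgue (E \<inter> {s..v}) \<le> measure lebesgue (E \<inter> {u..v})" by simp
    moreover have "s + r = v" by (simp add: r_def)
    ultimately show "measure lebesgue (E \<inter> {u..v}) \<ge> (v-u)/2" using fs vs r_def by simp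
  qed
qed


lemma cover:
  fixes g :: "real \<Rightarrow> real"
  assumes D: "\<forall>r :: nat \<Rightarrow> real. (\<forall>n. r n > 0) \<and> decseq r \<and> r \<longlonglongrightarrow> 0 \<longrightarrow>
        (\<lambda>n. g (r n) / r n) \<longlonglongrightarrow> 1"
  shows "\<exists>n::nat. \<forall>r. 0 < r \<and> r \<le> 1/(real n + 1) \<longrightarrow> g r \<ge> r/2"
proof (rule ccontr)
  assume "\<not> ?thesis"
  then have N: "\<forall>n::nat. \<exists>r. 0 < r \<and> r \<le> 1/(real n + 1) \<and> g r < r/2"
    by (meson not_le)
  define P where "P = (\<lambda>\<epsilon> r. 0 < r \<and> r \<le> \<epsilon> \<and> g r < r/2)"
  have ex: "\<exists>r. P \<epsilon> r" if e: "\<epsilon> > 0" for \<epsilon>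
  proof -
    obtain n :: nat where n: "inverse (real (Suc n)) < \<epsilon>" using reals_Archimedean[OF e] by blast
    obtain r where r: "0 < r" "r \<le> 1/(real n + 1)" "g r < r/2" using N by blast
    have "1/(real n + 1) = inverse (real (Suc n))" by (simp add: divide_inverse)
    then show ?thesis using r n unfolding P_def by (intro exI[of _ r]) auto
  qed
  define pick where "pick = (\<lambda>\<epsilon>. SOME r. P \<epsilon> r)"
  have pick: "P \<epsilon> (pick \<epsilon>)" if "\<epsilon> > 0" for \<epsilon>
    unfolding pick_def using someI_ex[OF ex[OF that]] .
  define s where "s = rec_nat (pick 1) (\<lambda>n p. pick (min p (1/(real n + 2))))"
  have s0: "s 0 = pick 1" by (simp add: s_def)
  have sS: "s (Suc n) = pick (min (s n) (1/(real n + 2)))" for n by (simp add: s_def)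
  have props: "P (1/(real n + 1)) (s n)" for n
  proof (induction n)
    case 0 then show ?case using pick[of 1] s0 by simp
  next
    case (Suc n)
    then have "min (s n) (1/(real n + 2)) > 0" by (simp add: P_def)
    then have "P (min (s n) (1/(real n + 2))) (s (Suc n))" using pick sS by simp
    then show ?case by (simp add: P_def add.commute)
  qed
  have pos: "\<forall>n. s n > 0" using props by (simp add: P_def)
  have dec: "decseq s"
  proof (rule decseq_SucI)
    fix n
    have "min (s n) (1/(real n + 2)) > 0" using pos by simp
    then have "P (min (s n) (1/(real n + 2))) (s (Suc n))" using pick sS by simp
    then show "s (Suc n) \<le> s n" by (simp add: P_def)
  qed
  have lim: "s \<longlonglongrightarrow> 0"
  proof (rule tendsto_sandwich[of "\<lambda>_. 0" s sequentially "\<lambda>n. 1/(real n + 1)"])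
    show "\<forall>\<^sub>F n in sequentially. 0 \<le> s n" using pos by (simp add: less_imp_le)
    show "\<forall>\<^sub>F n in sequentially. s n \<le> 1/(real n + 1)" using props by (simp add: P_def)
    show "(\<lambda>_. 0) \<longlonglongrightarrow> (0::real)" by simp
    show "(\<lambda>n. 1/(real n + 1)) \<longlonglongrightarrow> (0::real)" using LIMSEQ_inverse_real_of_nat
      by (simp add: divide_inverse add.commute)
  qed
  have conv: "(\<lambda>n. g (s n) / s n) \<longlonglongrightarrow> 1" using D pos dec lim by blast
  have "g (s n) / s n \<le> 1/2" for n
  proof -
    have "g (s n) < s n / 2" using props[of n] by (simp add: P_def)
    then show ?thesis using pos by (simp add: divide_le_eq)
  qed
  then have "1 \<le> (1/2::real)" using LIMSEQ_le_const2[OF conv] by blast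
  then show False by simp
qed


theorem theorem3p4:
  fixes E :: "real set"
  assumes "E \<in> sets lebesgue"
    and "weakly_nowhere_dense E"
  shows "first_category_in (top_of_set E) {x \<in> E. left_density_point E x}
       \<and> first_category_in (top_of_set E) {x \<in> E. right_density_point E x}"
proof
  note Em = assms(1) and wnd = assms(2)
  show "first_category_in (top_of_set E) {x \<in> E. left_density_point E x}"
    unfolding first_category_in_def
  proof (intro exI conjI allI)
    fix n :: nat
    have h: "1/(real n + 1) > 0" by simp
    show "nowhere_dense_in (top_of_set E)
      {x\<in>E. \<forall>r. 0 < r \<and> r \<le> 1/(real n + 1) \<longrightarrow> (\<lambda>r x. measure lebesgue (E \<inter> {x-r..x})) r x \<ge> r/2}"
      by (rule nd_generic) (use lip_left[OF Em] core_left[OF Em wnd h] in auto)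
  next
    show "{x \<in> E. left_density_point E x} \<subseteq> (\<Union>n::nat.
      {x\<in>E. \<forall>r. 0 < r \<and> r \<le> 1/(real n + 1) \<longrightarrow> (\<lambda>r x. measure lebesgue (E \<inter> {x-r..x})) r x \<ge> r/2})"
    proof
      fix x assume x: "x \<in> {x \<in> E. left_density_point E x}"
      then obtain n :: nat where "\<forall>r. 0 < r \<and> r \<le> 1/(real n + 1) \<longrightarrow> measure lebesgue (E \<inter> {x-r..x}) \<ge> r/2"
        using cover[of "\<lambda>r. measure lebesgue (E \<inter> {x-r..x})"] unfolding left_density_point_def by auto
      then show "x \<in> (\<Union>n::nat.
      {x\<in>E. \<forall>r. 0 < r \<and> r \<le> 1/(real n + 1) \<longrightarrow> (\<lambda>r x. measure lebesgue (E \<inter> {x-r..x})) r x \<ge> r/2})"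
        using x by auto
    qed
  qed
  show "first_category_in (top_of_set E) {x \<in> E. right_density_point E x}"
    unfolding first_category_in_def
  proof (intro exI conjI allI)
    fix n :: nat
    have h: "1/(real n + 1) > 0" by simp
    show "nowhere_dense_in (top_of_set E)
      {x\<in>E. \<forall>r. 0 < r \<and> r \<le> 1/(real n + 1) \<longrightarrow> (\<lambda>r x. measure lebesgue (E \<inter> {x..x+r})) r x \<ge> r/2}"
      by (rule nd_generic) (use lip_right[OF Em] core_right[OF Em wnd h] in auto)
  next
    show "{x \<in> E. right_density_point E x} \<subseteq> (\<Union>n::nat.
      {x\<in>E. \<forall>r. 0 < r \<and> r \<le> 1/(real n + 1) \<longrightarrow> (\<lambda>r x. measure lebesgue (E \<inter> {x..x+r})) r x \<ge> r/2})"
    proof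
      fix x assume x: "x \<in> {x \<in> E. right_density_point E x}"
      then obtain n :: nat where "\<forall>r. 0 < r \<and> r \<le> 1/(real n + 1) \<longrightarrow> measure lebesgue (E \<inter> {x..x+r}) \<ge> r/2"
        using cover[of "\<lambda>r. measure lebesgue (E \<inter> {x..x+r})"] unfolding right_density_point_def by auto
      then show "x \<in> (\<Union>n::nat.
      {x\<in>E. \<forall>r. 0 < r \<and> r \<le> 1/(real n + 1) \<longrightarrow> (\<lambda>r x. measure lebesgue (E \<inter> {x..x+r})) r x \<ge> r/2})"
        using x by auto
    qed
  qed
qed

end
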